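(* Let $X$ be a Banach lattice with order continuous norm, let $S$ be a convex $C_0$-semigroup on $X$ with generator $A$, and let $T$ be a convex $C_0$-semigroup on $X$ with generator $B$ such that $B\subset A$, i.e. $D(B)\subset D(A)$ and $A|_{D(B)}=B$. If $D(B)$ is dense in $X$, then $S(t)=T(t)$ for all $t\ge 0$.
   Context: A Banach lattice $X$ has order continuous norm if $\|x_\alpha\|\to 0$ for every net $x_\alpha\downarrow 0$. An operator $T\colon X\to X$ is convex if $T(\lambda x+(1-\lambda)y)\le \lambda Tx+(1-\lambda)Ty$ for all $x,y$, $\lambda\in[0,1]$, and bounded if $\sup_{\|x\|\le r}\|Tx\|<\infty$ for all $r>0$. A convex $C_0$-semigroup is a family $(S(t))_{t\ge0}$ of bounded convex operators $X\to X$ with $S(0)=\mathrm{id}$, $S(t+s)=S(t)S(s)$ for all $s,t\ge0$, and $S(t)x\to x$ as $t\downarrow 0$ for all $x$. Its generator is $Ax:=\lim_{h\downarrow 0}\frac{S(h)x-x}{h}$ with domain $D(A)$ the set of $x$ for which this norm limit exists. *)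

theory Defs
  imports "HOL-Analysis.Analysis"
begin

class banach_lattice = banach + ordered_real_vector + lattice +
  assumes lattice_norm: "sup x (- x) \<le> sup y (- y) \<Longrightarrow> norm x \<le> norm y"

definition net_decreasing_to_zero ::
  "'i set \<Rightarrow> ('i \<Rightarrow> 'i \<Rightarrow> bool) \<Rightarrow> ('i \<Rightarrow> 'a::banach_lattice) \<Rightarrow> bool" where
  "net_decreasing_to_zero I le x \<longleftrightarrow>
     I \<noteq> {} \<and>
     (\<forall>a\<in>I. le a a) \<and>
     (\<forall>a\<in>I. \<forall>b\<in>I. \<forall>c\<in>I. le a b \<longrightarrow> le b c \<longrightarrow> le a c) \<and>
     (\<forall>a\<in>I. \<forall>b\<in>I. \<exists>c\<in>I. le a c \<and> le b c) \<and>
     (\<forall>a\<in>I. \<forall>b\<in>I. le a b \<longrightarrow> x b \<le> x a) \<and>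
     (\<forall>a\<in>I. 0 \<le> x a) \<and>
     (\<forall>z. (\<forall>a\<in>I. z \<le> x a) \<longrightarrow> z \<le> 0)"

definition net_norm_to_zero ::
  "'i set \<Rightarrow> ('i \<Rightarrow> 'i \<Rightarrow> bool) \<Rightarrow> ('i \<Rightarrow> 'a::banach_lattice) \<Rightarrow> bool" where
  "net_norm_to_zero I le x \<longleftrightarrow>
     (\<forall>e>0. \<exists>a\<in>I. \<forall>b\<in>I. le a b \<longrightarrow> norm (x b) < e)"

text \<open>Order continuous norm. Nets are indexed by directed subsets of the type 'a set
  (index sets of arbitrary size up to 2^|X| suffice).\<close>
definition order_continuous_norm :: "'a::banach_lattice itself \<Rightarrow> bool" where
  "order_continuous_norm _ \<longleftrightarrow>
     (\<forall>(I::'a set set) le (x::'a set \<Rightarrow> 'a).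
        net_decreasing_to_zero I le x \<longrightarrow> net_norm_to_zero I le x)"

definition convex_operator :: "('a::banach_lattice \<Rightarrow> 'a) \<Rightarrow> bool" where
  "convex_operator T \<longleftrightarrow>
     (\<forall>x y. \<forall>c::real. 0 \<le> c \<and> c \<le> 1 \<longrightarrow>
        T (c *\<^sub>R x + (1 - c) *\<^sub>R y) \<le> c *\<^sub>R T x + (1 - c) *\<^sub>R T y)"

definition bounded_operator :: "('a::banach_lattice \<Rightarrow> 'a) \<Rightarrow> bool" where
  "bounded_operator T \<longleftrightarrow> (\<forall>r>0. \<exists>M. \<forall>x. norm x \<le> r \<longrightarrow> norm (T x) \<le> M)"

definition convex_C0_semigroup :: "(real \<Rightarrow> 'a::banach_lattice \<Rightarrow> 'a) \<Rightarrow> bool" where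
  "convex_C0_semigroup S \<longleftrightarrow>
     (\<forall>t\<ge>0. convex_operator (S t) \<and> bounded_operator (S t)) \<and>
     S 0 = id \<and>
     (\<forall>s\<ge>0. \<forall>t\<ge>0. S (t + s) = S t \<circ> S s) \<and>
     (\<forall>x. ((\<lambda>t. S t x) \<longlongrightarrow> x) (at_right 0))"

definition generator_domain :: "(real \<Rightarrow> 'a::banach_lattice \<Rightarrow> 'a) \<Rightarrow> 'a set" where
  "generator_domain S = {x. \<exists>y. ((\<lambda>h. (1 / h) *\<^sub>R (S h x - x)) \<longlongrightarrow> y) (at_right 0)}"

definition generator :: "(real \<Rightarrow> 'a::banach_lattice \<Rightarrow> 'a) \<Rightarrow> 'a \<Rightarrow> 'a" where
  "generator S x = Lim (at_right 0) (\<lambda>h. (1 / h) *\<^sub>R (S h x - x))"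

end

theory Submission
  imports Defs
begin

lemma bl_abs_nonneg: "0 \<le> sup x (- x :: 'a::banach_lattice)"
proof -
  have "x + (-x) \<le> sup x (-x) + sup x (-x)" by (intro add_mono) auto
  then have "0 \<le> (2::real) *\<^sub>R sup x (-x)" by (simp add: scaleR_2)
  then have "(1/2::real) *\<^sub>R 0 \<le> (1/2::real) *\<^sub>R ((2::real) *\<^sub>R sup x (-x))"
    by (intro scaleR_left_mono) auto
  then show ?thesis by simp
qed

lemma bl_sup_pos: "0 \<le> (w::'a::banach_lattice) \<Longrightarrow> sup w (-w) = w"
  by (metis neg_le_0_iff_le order.trans sup.absorb1)

lemma bl_norm_abs: "norm (sup x (- x)) = norm (x::'a::banach_lattice)"
proof -
  have e: "sup (sup x (-x)) (- sup x (-x)) = sup x (-x)"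
    by (rule bl_sup_pos[OF bl_abs_nonneg])
  show ?thesis
    by (rule antisym; rule lattice_norm; simp only: e)
qed

lemma bl_norm_mono: "0 \<le> (x::'a::banach_lattice) \<Longrightarrow> x \<le> y \<Longrightarrow> norm x \<le> norm y"
proof (rule lattice_norm)
  assume "0 \<le> x" "x \<le> y"
  then have "0 \<le> y" by simp
  then show "sup x (-x) \<le> sup y (-y)" using \<open>0 \<le> x\<close> \<open>x \<le> y\<close>
    by (simp add: bl_sup_pos)
qed

lemma bl_norm_between:
  fixes lo v hi :: "'a::banach_lattice"
  assumes "lo \<le> v" "v \<le> hi"
  shows "norm v \<le> norm lo + norm hi"
proof -
  define w where "w = sup lo (-lo) + sup hi (-hi)"
  have w0: "0 \<le> w" unfolding w_def using bl_abs_nonneg[of lo] bl_abs_nonneg[of hi]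
    by (simp add: add_nonneg_nonneg)
  have "v \<le> w"
  proof -
    have "v \<le> sup hi (-hi)" using assms(2) by (meson order.trans sup.cobounded1)
    also have "\<dots> \<le> w" unfolding w_def using bl_abs_nonneg[of lo] by simp
    finally show ?thesis .
  qed
  moreover have "-v \<le> w"
  proof -
    have "-v \<le> -lo" using assms(1) by simp
    also have "\<dots> \<le> sup lo (-lo)" by simp
    also have "\<dots> \<le> w" unfolding w_def using bl_abs_nonneg[of hi] by simp
    finally show ?thesis .
  qed
  ultimately have "sup v (-v) \<le> sup w (-w)" using bl_sup_pos[OF w0] by simp
  then have "norm v \<le> norm w" by (rule lattice_norm)
  also have "\<dots> \<le> norm (sup lo (-lo)) + norm (sup hi (-hi))" unfolding w_def by (rule norm_triangle_ineq)
  finally show ?thesis by (simp add: bl_norm_abs)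
qed

lemma bl_scale_sup:
  fixes a b :: "'a::banach_lattice"
  assumes "0 < c"
  shows "c *\<^sub>R sup a b = sup (c *\<^sub>R a) (c *\<^sub>R b)"
proof (rule antisym)
  have "sup (c *\<^sub>R a) (c *\<^sub>R b) \<le> c *\<^sub>R sup a b"
    using assms by (simp add: scaleR_left_mono)
  moreover have "c *\<^sub>R sup a b \<le> sup (c *\<^sub>R a) (c *\<^sub>R b)"
  proof -
    have "a \<le> (1/c) *\<^sub>R sup (c *\<^sub>R a) (c *\<^sub>R b)"
      using scaleR_left_mono[of "c *\<^sub>R a" "sup (c *\<^sub>R a) (c *\<^sub>R b)" "1/c"] assms by simp
    moreover have "b \<le> (1/c) *\<^sub>R sup (c *\<^sub>R a) (c *\<^sub>R b)"
      using scaleR_left_mono[of "c *\<^sub>R b" "sup (c *\<^sub>R a) (c *\<^sub>R b)" "1/c"] assms by simp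
    ultimately have "sup a b \<le> (1/c) *\<^sub>R sup (c *\<^sub>R a) (c *\<^sub>R b)" by simp
    from scaleR_left_mono[OF this, of c] assms show ?thesis by simp
  qed
  ultimately show "c *\<^sub>R sup a b \<le> sup (c *\<^sub>R a) (c *\<^sub>R b)"
    "sup (c *\<^sub>R a) (c *\<^sub>R b) \<le> c *\<^sub>R sup a b" by auto
qed

lemma bl_archimedean:
  fixes z d :: "'a::banach_lattice"
  assumes "\<And>n::nat. real n *\<^sub>R z \<le> d"
  shows "z \<le> 0"
proof -
  define p where "p = sup z 0"
  have p0: "0 \<le> p" unfolding p_def by simp
  have "real n * norm p \<le> norm (sup d 0)" if "n > 0" for n :: nat
  proof -
    have "real n *\<^sub>R p = sup (real n *\<^sub>R z) 0"
      unfolding p_def using bl_scale_sup[of "real n" z 0] that by simp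
    also have "\<dots> \<le> sup d 0" using assms[of n] by (meson order.refl sup_mono)
    finally have "norm (real n *\<^sub>R p) \<le> norm (sup d 0)"
      using p0 by (intro bl_norm_mono) (simp_all add: scaleR_nonneg_nonneg)
    then show ?thesis by simp
  qed
  then have "norm p = 0"
  proof -
    have "norm p \<le> 0"
    proof (rule ccontr)
      assume "\<not> norm p \<le> 0"
      then have np: "norm p > 0" by simp
      obtain n :: nat where n: "norm (sup d 0) / norm p < real n" using reals_Archimedean2 by blast
      then have "n > 0" using np by (metis divide_nonneg_pos norm_ge_zero not_less of_nat_0_less_iff order_le_less_trans)
      then have "real n * norm p \<le> norm (sup d 0)" using \<open>\<And>n. n>0 \<Longrightarrow> _\<close> by blast
      with n np show False by (simp add: divide_less_eq)
    qed
    then show ?thesis by simp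
  qed
  then have "p = 0" by simp
  then show ?thesis unfolding p_def by (metis sup.cobounded1)
qed

lemma conv_step:
  fixes F :: "'a::banach_lattice \<Rightarrow> 'a"
  assumes "convex_operator F" "0 \<le> \<mu>" "\<mu> \<le> 1" "b = \<mu> *\<^sub>R z + (1 - \<mu>) *\<^sub>R a"
  shows "F b - F a \<le> \<mu> *\<^sub>R (F z - F a)"
proof -
  have "F b \<le> \<mu> *\<^sub>R F z + (1 - \<mu>) *\<^sub>R F a"
    using assms unfolding convex_operator_def by blast
  then show ?thesis by (simp add: algebra_simps)
qed

lemma conv_lipschitz:
  fixes F :: "'a::banach_lattice \<Rightarrow> 'a"
  assumes cF: "convex_operator F" and rho: "0 < \<rho>"
    and bd: "\<And>z. norm (z - c) \<le> \<rho> \<Longrightarrow> norm (F z) \<le> M"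
    and a: "norm (a - c) \<le> \<rho>/2" and b: "norm (b - c) \<le> \<rho>/2"
  shows "norm (F b - F a) \<le> (8 * M / \<rho>) * norm (b - a)"
proof (cases "a = b")
  case True then show ?thesis by simp
next
  case False
  define d where "d = norm (b - a)"
  have d0: "d > 0" using False unfolding d_def by simp
  define \<mu> where "\<mu> = d / (d + \<rho>/2)"
  have mu0: "0 \<le> \<mu>" "\<mu> \<le> 1" unfolding \<mu>_def using d0 rho by auto
  have mule: "\<mu> \<le> 2 * d / \<rho>" unfolding \<mu>_def using d0 rho by (simp add: field_simps)
  have key: "\<mu> * (1 + \<rho> / (2 * d)) = 1" unfolding \<mu>_def
  proof -
    have "\<rho> * (d * 2) + d * (d * 4) > 0" using d0 rho by (simp add: add_pos_pos)
    then show "d / (d + \<rho> / 2) * (1 + \<rho> / (2 * d)) = 1" using d0 rho by (simp add: field_simps)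
  qed
  have M0: "0 \<le> M" using bd[of c] rho by (smt (verit) norm_ge_zero diff_self norm_zero)
  define z where "z = b + (\<rho> / (2 * d)) *\<^sub>R (b - a)"
  define z' where "z' = a + (\<rho> / (2 * d)) *\<^sub>R (a - b)"
  have nz: "norm (z - c) \<le> \<rho>"
  proof -
    have "norm (z - c) \<le> norm (b - c) + norm ((\<rho> / (2 * d)) *\<^sub>R (b - a))"
      unfolding z_def by (metis add_diff_eq diff_add_eq norm_triangle_ineq add.commute)
    also have "norm ((\<rho> / (2 * d)) *\<^sub>R (b - a)) = \<rho>/2" using d0 rho unfolding d_def by simp
    finally show ?thesis using b by simp
  qed
  have nz': "norm (z' - c) \<le> \<rho>"
  proof -
    have "norm (z' - c) \<le> norm (a - c) + norm ((\<rho> / (2 * d)) *\<^sub>R (a - b))"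
      unfolding z'_def by (metis add_diff_eq diff_add_eq norm_triangle_ineq add.commute)
    also have "norm ((\<rho> / (2 * d)) *\<^sub>R (a - b)) = \<rho>/2" using d0 rho unfolding d_def
      by (simp add: norm_minus_commute)
    finally show ?thesis using a by simp
  qed
  have eb: "b = \<mu> *\<^sub>R z + (1 - \<mu>) *\<^sub>R a"
  proof -
    have "\<mu> *\<^sub>R z + (1 - \<mu>) *\<^sub>R a = a + \<mu> *\<^sub>R (z - a)" by (simp add: algebra_simps)
    also have "z - a = (1 + \<rho> / (2 * d)) *\<^sub>R (b - a)" unfolding z_def by (simp add: algebra_simps)
    also have "\<mu> *\<^sub>R \<dots> = b - a" using key by simp
    finally show ?thesis by simp
  qed
  have ea: "a = \<mu> *\<^sub>R z' + (1 - \<mu>) *\<^sub>R b"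
  proof -
    have "\<mu> *\<^sub>R z' + (1 - \<mu>) *\<^sub>R b = b + \<mu> *\<^sub>R (z' - b)" by (simp add: algebra_simps)
    also have "z' - b = (1 + \<rho> / (2 * d)) *\<^sub>R (a - b)" unfolding z'_def by (simp add: algebra_simps)
    also have "\<mu> *\<^sub>R \<dots> = a - b" using key by simp
    finally show ?thesis by simp
  qed
  have up: "F b - F a \<le> \<mu> *\<^sub>R (F z - F a)" by (rule conv_step[OF cF mu0 eb])
  have lo': "F a - F b \<le> \<mu> *\<^sub>R (F z' - F b)" by (rule conv_step[OF cF mu0 ea])
  have lo: "- (\<mu> *\<^sub>R (F z' - F b)) \<le> F b - F a" 
  proof -
    have "- (F b - F a) \<le> \<mu> *\<^sub>R (F z' - F b)" using lo' by (simp only: minus_diff_eq)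
    then show ?thesis by (simp only: minus_le_iff)
  qed
  have "norm (F b - F a) \<le> norm (- (\<mu> *\<^sub>R (F z' - F b))) + norm (\<mu> *\<^sub>R (F z - F a))"
    by (rule bl_norm_between[OF lo up])
  also have "\<dots> = \<mu> * (norm (F z' - F b) + norm (F z - F a))" using mu0 by (simp only: norm_minus_cancel norm_scaleR abs_of_nonneg distrib_left)
  also have "\<dots> \<le> \<mu> * (4 * M)"
  proof -
    have nb: "norm (b - c) \<le> \<rho>" and na: "norm (a - c) \<le> \<rho>" using a b rho by linarith+
    have "norm (F z' - F b) \<le> norm (F z') + norm (F b)" by (rule norm_triangle_ineq4)
    also have "\<dots> \<le> M + M" using bd[OF nz'] bd[OF nb] by linarith
    finally have 1: "norm (F z' - F b) \<le> M + M" .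
    have "norm (F z - F a) \<le> norm (F z) + norm (F a)" by (rule norm_triangle_ineq4)
    also have "\<dots> \<le> M + M" using bd[OF nz] bd[OF na] by linarith
    finally have 2: "norm (F z - F a) \<le> M + M" .
    from 1 2 show ?thesis using mu0 by (intro mult_left_mono) auto
  qed
  also have "\<dots> \<le> (2 * d / \<rho>) * (4 * M)" using mule M0 by (intro mult_right_mono) auto
  also have "\<dots> = (8 * M / \<rho>) * norm (b - a)" unfolding d_def by (simp add: field_simps)
  finally show ?thesis .
qed

lemma conv_quot_mono:
  fixes F :: "'a::banach_lattice \<Rightarrow> 'a"
  assumes cF: "convex_operator F" and h: "0 < h" "h \<le> h'"
  shows "(1/h) *\<^sub>R (F (x + h *\<^sub>R v) - F x) \<le> (1/h') *\<^sub>R (F (x + h' *\<^sub>R v) - F x)"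
proof -
  have h': "0 < h'" using h by simp
  have e: "x + h *\<^sub>R v = (h/h') *\<^sub>R (x + h' *\<^sub>R v) + (1 - h/h') *\<^sub>R x"
    using h' by (simp add: algebra_simps)
  have "F (x + h *\<^sub>R v) - F x \<le> (h/h') *\<^sub>R (F (x + h' *\<^sub>R v) - F x)"
    by (rule conv_step[OF cF _ _ e]) (use h h' in auto)
  from scaleR_left_mono[OF this, of "1/h"] h show ?thesis by simp
qed

lemma conv_quot_lower:
  fixes F :: "'a::banach_lattice \<Rightarrow> 'a"
  assumes cF: "convex_operator F" and h: "0 < h"
  shows "F x - F (x - v) \<le> (1/h) *\<^sub>R (F (x + h *\<^sub>R v) - F x)"
proof -
  have e: "x = (1/(1+h)) *\<^sub>R (x + h *\<^sub>R v) + (1 - 1/(1+h)) *\<^sub>R (x - v)"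
  proof -
    have "(1/(1+h)) *\<^sub>R (x + h *\<^sub>R v) + (1 - 1/(1+h)) *\<^sub>R (x - v)
        = (1/(1+h)) *\<^sub>R ((x + h *\<^sub>R v) + h *\<^sub>R (x - v))"
      using h by (simp add: algebra_simps field_simps)
    also have "(x + h *\<^sub>R v) + h *\<^sub>R (x - v) = (1 + h) *\<^sub>R x" by (simp add: algebra_simps)
    finally show ?thesis using h by simp
  qed
  have "F x - F (x - v) \<le> (1/(1+h)) *\<^sub>R (F (x + h *\<^sub>R v) - F (x - v))"
    by (rule conv_step[OF cF _ _ e]) (use h in auto)
  from scaleR_left_mono[OF this, of "1+h"] h
  have "(1+h) *\<^sub>R (F x - F (x - v)) \<le> F (x + h *\<^sub>R v) - F (x - v)" by simp
  then have "h *\<^sub>R (F x - F (x - v)) \<le> F (x + h *\<^sub>R v) - F x" by (simp add: algebra_simps)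
  from scaleR_left_mono[OF this, of "1/h"] h show ?thesis by simp
qed

lemma oc_cauchy:
  fixes q :: "real \<Rightarrow> 'a::banach_lattice"
  assumes oc: "order_continuous_norm TYPE('a)"
    and mono: "\<And>h h'. 0 < h \<Longrightarrow> h \<le> h' \<Longrightarrow> h' \<le> 1 \<Longrightarrow> q h \<le> q h'"
    and lower: "\<And>h. 0 < h \<Longrightarrow> h \<le> 1 \<Longrightarrow> c \<le> q h"
    and e: "0 < e"
  shows "\<exists>h0 y0. 0 < h0 \<and> h0 \<le> 1 \<and> (\<forall>h. 0 < h \<and> h \<le> h0 \<longrightarrow> norm (q h - y0) < e)"
proof -
  define L where "L = {y. \<forall>h. 0 < h \<and> h \<le> 1 \<longrightarrow> y \<le> q h}"
  define W where "W = {w. \<exists>h y. 0 < h \<and> h \<le> 1 \<and> y \<in> L \<and> w = q h - y}"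
  define I where "I = (\<lambda>w. {w}) ` W"
  define le :: "'a set \<Rightarrow> 'a set \<Rightarrow> bool" where "le = (\<lambda>A B. the_elem B \<le> the_elem A)"
  define xx :: "'a set \<Rightarrow> 'a" where "xx = the_elem"
  have cL: "c \<in> L" unfolding L_def using lower by auto
  have supL: "sup y1 y2 \<in> L" if "y1 \<in> L" "y2 \<in> L" for y1 y2
    using that unfolding L_def by auto
  have ndz: "net_decreasing_to_zero I le xx"
    unfolding net_decreasing_to_zero_def
  proof (intro conjI)
    have "q 1 - c \<in> W" unfolding W_def using cL by (intro CollectI exI[of _ 1] exI[of _ c]) auto
    then show "I \<noteq> {}" unfolding I_def by blast
    show "\<forall>a\<in>I. le a a" unfolding le_def by auto
    show "\<forall>a\<in>I. \<forall>b\<in>I. \<forall>c\<in>I. le a b \<longrightarrow> le b c \<longrightarrow> le a c" unfolding le_def by auto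
    show "\<forall>a\<in>I. \<forall>b\<in>I. \<exists>c\<in>I. le a c \<and> le b c"
    proof (intro ballI)
      fix a b assume "a \<in> I" "b \<in> I"
      then obtain h1 y1 h2 y2 where h: "0 < h1" "h1 \<le> 1" "y1 \<in> L" "a = {q h1 - y1}"
          "0 < h2" "h2 \<le> 1" "y2 \<in> L" "b = {q h2 - y2}"
        unfolding I_def W_def by blast
      define cc where "cc = {q (min h1 h2) - sup y1 y2}"
      have "q (min h1 h2) - sup y1 y2 \<in> W" unfolding W_def using h supL
        by (intro CollectI exI[of _ "min h1 h2"] exI[of _ "sup y1 y2"]) auto
      then have "cc \<in> I" unfolding cc_def I_def by (rule imageI)
      moreover have "q (min h1 h2) - sup y1 y2 \<le> q h1 - y1"
        using mono[of "min h1 h2" h1] h by (intro diff_mono) auto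
      moreover have "q (min h1 h2) - sup y1 y2 \<le> q h2 - y2"
        using mono[of "min h1 h2" h2] h by (intro diff_mono) auto
      ultimately have "cc \<in> I \<and> le a cc \<and> le b cc" unfolding le_def cc_def using h by simp
      then show "\<exists>c\<in>I. le a c \<and> le b c" by blast
    qed
    show "\<forall>a\<in>I. \<forall>b\<in>I. le a b \<longrightarrow> xx b \<le> xx a" unfolding le_def xx_def by auto
    show "\<forall>a\<in>I. 0 \<le> xx a" unfolding I_def W_def L_def xx_def by auto
    show "\<forall>z. (\<forall>a\<in>I. z \<le> xx a) \<longrightarrow> z \<le> 0"
    proof (intro allI impI)
      fix z assume za: "\<forall>a\<in>I. z \<le> xx a"
      have zw: "z \<le> q h - y" if "0 < h" "h \<le> 1" "y \<in> L" for h y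
      proof -
        have "q h - y \<in> W" unfolding W_def using that by blast
        then have "{q h - y} \<in> I" unfolding I_def by (rule imageI)
        then have "z \<le> xx {q h - y}" using za by blast
        then show ?thesis unfolding xx_def by simp
      qed
      have inL: "c + real n *\<^sub>R z \<in> L" for n
      proof (induction n)
        case 0 then show ?case using cL by simp
      next
        case (Suc n)
        show ?case unfolding L_def
        proof (intro CollectI allI impI)
          fix h :: real assume hh: "0 < h \<and> h \<le> 1"
          have "z \<le> q h - (c + real n *\<^sub>R z)" using zw[OF _ _ Suc] hh by auto
          then have "c + real n *\<^sub>R z + z \<le> q h" by (simp add: le_diff_eq add.commute)
          then show "c + real (Suc n) *\<^sub>R z \<le> q h" by (simp add: algebra_simps)
        qed
      qed
      have "real n *\<^sub>R z \<le> q 1 - c" for n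
      proof -
        have "c + real n *\<^sub>R z \<le> q 1" using inL[of n] unfolding L_def by auto
        then show ?thesis by (simp add: le_diff_eq add.commute)
      qed
      then show "z \<le> 0" by (rule bl_archimedean)
    qed
  qed
  have "net_norm_to_zero I le xx"
    using oc ndz unfolding order_continuous_norm_def by blast
  then obtain a where a: "a \<in> I" "\<forall>b\<in>I. le a b \<longrightarrow> norm (xx b) < e"
    using e unfolding net_norm_to_zero_def by blast
  then obtain h0 y0 where h0: "0 < h0" "h0 \<le> 1" "y0 \<in> L" "a = {q h0 - y0}"
    unfolding I_def W_def by blast
  have "norm (q h - y0) < e" if "0 < h" "h \<le> h0" for h
  proof -
    have "q h - y0 \<in> W" unfolding W_def using that h0 by (intro CollectI exI[of _ h] exI[of _ y0]) auto
    then have "{q h - y0} \<in> I" unfolding I_def by (rule imageI)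
    moreover have "le a {q h - y0}" unfolding le_def using h0 that mono[of h h0]
      by (auto intro: diff_right_mono)
    ultimately have "norm (xx {q h - y0}) < e" using a by blast
    then show ?thesis unfolding xx_def by simp
  qed
  then show ?thesis using h0 by blast
qed

lemma oc_mono_lim:
  fixes q :: "real \<Rightarrow> 'a::banach_lattice"
  assumes oc: "order_continuous_norm TYPE('a)"
    and mono: "\<And>h h'. 0 < h \<Longrightarrow> h \<le> h' \<Longrightarrow> h' \<le> 1 \<Longrightarrow> q h \<le> q h'"
    and lower: "\<And>h. 0 < h \<Longrightarrow> h \<le> 1 \<Longrightarrow> c \<le> q h"
  shows "\<exists>l. (q \<longlongrightarrow> l) (at_right 0)"
proof -
  note cau = oc_cauchy[where q=q and c=c, OF oc mono lower]
  define s where "s n = q (1 / (real n + 1))" for n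
  have small: "\<exists>N. \<forall>n\<ge>N. 1 / (real n + 1) \<le> h0" if "0 < h0" for h0 :: real
  proof -
    obtain N :: nat where "1 / h0 < real N" using reals_Archimedean2 by blast
    have "1 / (real n + 1) \<le> h0" if "n \<ge> N" for n
    proof -
      have "1 / h0 < real n + 1" using \<open>1 / h0 < real N\<close> that by linarith
      then have "1 < h0 * (real n + 1)" using \<open>0 < h0\<close> by (simp add: field_simps)
      then show ?thesis by (simp add: field_simps)
    qed
    then show ?thesis by blast
  qed
  have "Cauchy s"
  proof (rule metric_CauchyI)
    fix e :: real assume e: "0 < e"
    obtain h0 y0 where hy: "0 < h0" "h0 \<le> 1" "\<forall>h. 0 < h \<and> h \<le> h0 \<longrightarrow> norm (q h - y0) < e/2"
      using cau[where e="e/2"] e by auto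
    obtain N where N: "\<forall>n\<ge>N. 1 / (real n + 1) \<le> h0" using small[OF hy(1)] by blast
    have "dist (s m) (s n) < e" if "m \<ge> N" "n \<ge> N" for m n
    proof -
      have "norm (s m - y0) < e/2" "norm (s n - y0) < e/2"
        unfolding s_def using hy(3) N that by auto
      then have "norm ((s m - y0) - (s n - y0)) < e" using norm_triangle_ineq4[of "s m - y0" "s n - y0"]
        by linarith
      then show ?thesis by (simp add: dist_norm)
    qed
    then show "\<exists>M. \<forall>m\<ge>M. \<forall>n\<ge>M. dist (s m) (s n) < e" by blast
  qed
  then obtain l where l: "s \<longlonglongrightarrow> l" using Cauchy_convergent_iff convergent_def by blast
  have "(q \<longlongrightarrow> l) (at_right 0)"
  proof (rule tendstoI)
    fix e :: real assume e: "0 < e"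
    obtain h0 y0 where hy: "0 < h0" "h0 \<le> 1" "\<forall>h. 0 < h \<and> h \<le> h0 \<longrightarrow> norm (q h - y0) < e/3"
      using cau[where e="e/3"] e by auto
    obtain N where N: "\<forall>n\<ge>N. 1 / (real n + 1) \<le> h0" using small[OF hy(1)] by blast
    obtain N2 where N2: "\<forall>n\<ge>N2. dist (s n) l < e/3"
      using l e unfolding lim_sequentially by (meson divide_pos_pos zero_less_numeral)
    define n where "n = max N N2"
    have 1: "dist (s n) l < e/3" using N2 unfolding n_def by auto
    have 2: "norm (s n - y0) < e/3" unfolding s_def using hy(3) N unfolding n_def by auto
    have "dist (q h) l < e" if "0 < h" "h < h0" for h
    proof -
      have 3: "norm (q h - y0) < e/3" using hy(3) that by auto
      have "norm (q h - l) \<le> norm (q h - y0) + norm (s n - y0) + norm (s n - l)"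
      proof -
        have "q h - l = ((q h - y0) - (s n - y0)) + (s n - l)" by (simp add: algebra_simps)
        then have "norm (q h - l) \<le> norm ((q h - y0) - (s n - y0)) + norm (s n - l)"
          by (metis norm_triangle_ineq)
        moreover have "norm ((q h - y0) - (s n - y0)) \<le> norm (q h - y0) + norm (s n - y0)"
          by (rule norm_triangle_ineq4)
        ultimately show ?thesis by linarith
      qed
      then show ?thesis using 1 2 3 by (simp add: dist_norm)
    qed
    then show "\<forall>\<^sub>F h in at_right 0. dist (q h) l < e"
      unfolding eventually_at_right_field using hy(1) by blast
  qed
  then show ?thesis by blast
qed

lemma lip_ball:
  fixes F :: "'a::banach_lattice \<Rightarrow> 'a"
  assumes cF: "convex_operator F" and bF: "bounded_operator F" and R: "0 < R"
  shows "\<exists>L. \<forall>a b. norm a \<le> R \<longrightarrow> norm b \<le> R \<longrightarrow> norm (F b - F a) \<le> L * norm (b - a)"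
proof -
  obtain M where M: "\<And>x. norm x \<le> 2 * R \<Longrightarrow> norm (F x) \<le> M"
    using bF R unfolding bounded_operator_def by (meson mult_pos_pos zero_less_numeral)
  have "norm (F b - F a) \<le> (8 * M / (2 * R)) * norm (b - a)" if "norm a \<le> R" "norm b \<le> R" for a b
    by (rule conv_lipschitz[OF cF, where c=0]) (use R M that in auto)
  then show ?thesis by blast
qed

lemma bdd_conv_isCont:
  fixes F :: "'a::banach_lattice \<Rightarrow> 'a"
  assumes cF: "convex_operator F" and bF: "bounded_operator F"
  shows "isCont F x"
proof -
  define R where "R = norm x + 1"
  have R: "0 < R" unfolding R_def by (simp add: add_nonneg_pos)
  obtain L0 where L0': "\<And>a b. norm a \<le> R \<Longrightarrow> norm b \<le> R \<Longrightarrow> norm (F b - F a) \<le> L0 * norm (b - a)"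
    using lip_ball[OF cF bF R] by blast
  define L where "L = max L0 0"
  have L: "norm (F b - F a) \<le> L * norm (b - a)" if "norm a \<le> R" "norm b \<le> R" for a b
  proof -
    have "L0 * norm (b - a) \<le> L * norm (b - a)" unfolding L_def by (intro mult_right_mono) auto
    then show ?thesis using L0'[OF that] by linarith
  qed
  have L0: "0 \<le> L" unfolding L_def by simp
  show ?thesis unfolding continuous_at_eps_delta
  proof (intro allI impI)
    fix e :: real assume e: "0 < e"
    define d where "d = min 1 (e / (L + 1))"
    have d: "0 < d" unfolding d_def using e L0 by simp
    have "dist (F x') (F x) < e" if "dist x' x < d" for x'
    proof -
      have nx': "norm x' \<le> R" using that norm_triangle_ineq2[of x' x] unfolding R_def d_def dist_norm
        by linarith
      have nx: "norm x \<le> R" unfolding R_def by simp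
      have "norm (F x' - F x) \<le> L * norm (x' - x)" using L[OF nx nx'] .
      also have "\<dots> \<le> L * d" using that L0 by (intro mult_left_mono) (auto simp: dist_norm)
      also have "\<dots> < e"
      proof -
        have "L * d \<le> L * (e / (L + 1))" using L0 unfolding d_def by (intro mult_left_mono) auto
        also have "\<dots> < e" using L0 e by (simp add: field_simps)
        finally show ?thesis .
      qed
      finally show ?thesis by (simp add: dist_norm)
    qed
    then show "\<exists>d>0. \<forall>x'. dist x' x < d \<longrightarrow> dist (F x') (F x) < e" using d by blast
  qed
qed

lemma sg_facts:
  assumes "convex_C0_semigroup S"
  shows sg_conv: "\<And>t. 0 \<le> t \<Longrightarrow> convex_operator (S t)"
    and sg_bdd: "\<And>t. 0 \<le> t \<Longrightarrow> bounded_operator (S t)"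
    and sg_0: "\<And>x. S 0 x = x"
    and sg_add: "\<And>s t x. 0 \<le> s \<Longrightarrow> 0 \<le> t \<Longrightarrow> S (t + s) x = S t (S s x)"
    and sg_right: "\<And>x. ((\<lambda>t. S t x) \<longlongrightarrow> x) (at_right 0)"
  using assms unfolding convex_C0_semigroup_def by (auto simp: fun_eq_iff)

lemma sg_isCont:
  assumes "convex_C0_semigroup S" "0 \<le> t"
  shows "isCont (S t) x"
  using bdd_conv_isCont sg_conv[OF assms(1)] sg_bdd[OF assms(1)] assms(2) by blast

lemma sg_sc0:
  assumes S: "convex_C0_semigroup S" and e: "0 < e"
  shows "\<exists>d>0. \<forall>r. 0 \<le> r \<and> r < d \<longrightarrow> norm (S r z - z) < e"
proof -
  have "\<forall>\<^sub>F r in at_right 0. dist (S r z) z < e"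
    using sg_right[OF S, of z] e by (rule tendstoD)
  then obtain b where b: "b > 0" "\<And>r. r > 0 \<Longrightarrow> r < b \<Longrightarrow> dist (S r z) z < e"
    unfolding eventually_at_right_field by auto
  have "norm (S r z - z) < e" if "0 \<le> r" "r < b" for r
  proof (cases "r = 0")
    case True then show ?thesis using e sg_0[OF S] by simp
  next
    case False then show ?thesis using b that by (simp add: dist_norm)
  qed
  then show ?thesis using b(1) by blast
qed

lemma conv_half:
  fixes F :: "'a::banach_lattice \<Rightarrow> 'a"
  assumes "convex_operator F"
  shows "F ((1/2) *\<^sub>R p + (1/2) *\<^sub>R q) \<le> (1/2) *\<^sub>R F p + (1/2) *\<^sub>R F q"
proof -
  have "F ((1/2) *\<^sub>R p + (1 - 1/2) *\<^sub>R q) \<le> (1/2) *\<^sub>R F p + (1 - 1/2) *\<^sub>R F q"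
  proof -
    have "0 \<le> (1/2::real)" "(1/2::real) \<le> 1" by simp_all
    then show ?thesis using assms unfolding convex_operator_def by blast
  qed
  then show ?thesis by simp
qed

lemma baire_conv:
  fixes F :: "nat \<Rightarrow> 'a::banach_lattice \<Rightarrow> 'a"
  assumes cF: "\<And>n. convex_operator (F n)"
    and contF: "\<And>n. continuous_on UNIV (F n)"
    and ptb: "\<And>z. \<exists>K. \<forall>n. norm (F n z) \<le> K"
  shows "\<exists>\<epsilon>>0. \<exists>M. \<forall>n a. norm (a - y) \<le> \<epsilon> \<longrightarrow> norm (F n a) \<le> M"
proof -
  define G where "G m = {z. \<forall>n. norm (F n z) \<le> real m \<and> norm (F n (2 *\<^sub>R y - z)) \<le> real m}" for m :: nat
  have clG: "closed (G m)" for m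
  proof -
    have c1: "closed {z. norm (F n z) \<le> real m}" for n
    proof (rule closed_Collect_le)
      show "continuous_on UNIV (\<lambda>z. norm (F n z))"
        by (intro continuous_on_norm contF)
    qed auto
    have c2: "closed {z. norm (F n (2 *\<^sub>R y - z)) \<le> real m}" for n
    proof (rule closed_Collect_le)
      show "continuous_on UNIV (\<lambda>z. norm (F n (2 *\<^sub>R y - z)))"
      proof -
        have l: "continuous_on UNIV (\<lambda>z. 2 *\<^sub>R y - z)" by (intro continuous_intros)
        have "continuous_on UNIV (\<lambda>z. F n (2 *\<^sub>R y - z))"
          by (rule continuous_on_compose2[OF contF[of n] l]) simp
        then show ?thesis by (rule continuous_on_norm)
      qed
    qed auto
    have "G m = (\<Inter>n. {z. norm (F n z) \<le> real m} \<inter> {z. norm (F n (2 *\<^sub>R y - z)) \<le> real m})"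
      unfolding G_def by auto
    moreover have "closed (\<Inter>n. {z. norm (F n z) \<le> real m} \<inter> {z. norm (F n (2 *\<^sub>R y - z)) \<le> real m})"
      by (intro closed_INT ballI closed_Int c1 c2)
    ultimately show ?thesis by simp
  qed
  have covG: "\<Union>(range G) = UNIV"
  proof -
    have "z \<in> (\<Union>m. G m)" for z
    proof -
      obtain K1 where K1: "\<forall>n. norm (F n z) \<le> K1" using ptb by blast
      obtain K2 where K2: "\<forall>n. norm (F n (2 *\<^sub>R y - z)) \<le> K2" using ptb by blast
      obtain m :: nat where m: "max K1 K2 \<le> real m" using real_arch_simple by blast
      have "\<forall>n. norm (F n z) \<le> real m \<and> norm (F n (2 *\<^sub>R y - z)) \<le> real m"
        using K1 K2 m by (meson max.bounded_iff order.trans)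
      then have "z \<in> G m" unfolding G_def by simp
      then show ?thesis by blast
    qed
    then show ?thesis by blast
  qed
  have "\<exists>m. interior (G m) \<noteq> {}"
  proof (rule ccontr)
    assume "\<not> ?thesis"
    then have "euclidean interior_of \<Union>(range G) = {}"
    proof (intro Baire_category_alt)
      show "completely_metrizable_space (euclidean :: 'a topology) \<or> locally_compact_space (euclidean :: 'a topology) \<and> regular_space (euclidean :: 'a topology)"
        by (rule disjI1, rule completely_metrizable_space_euclidean)
      show "countable (range G)" by simp
      fix T assume "T \<in> range G"
      then obtain m where "T = G m" by blast
      then show "closedin euclidean T \<and> euclidean interior_of T = {}"
        using clG[of m] \<open>\<not> (\<exists>m. interior (G m) \<noteq> {})\<close> by (simp add: closed_closedin[symmetric])
    qed
    then show False using covG by simp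
  qed
  then obtain m a where "a \<in> interior (G m)" by blast
  then obtain r where r: "r > 0" "ball a r \<subseteq> G m" using mem_interior by blast
  have upper: "\<exists>u. F n b \<le> u \<and> norm u \<le> real m" if "norm (b - y) < r" for n b
  proof -
    define z1 where "z1 = a + (b - y)"
    define z2 where "z2 = a - (b - y)"
    have "z1 \<in> ball a r" "z2 \<in> ball a r" 
    proof -
      have "norm (y - b) < r" using that by (simp add: norm_minus_commute)
      then show "z1 \<in> ball a r" "z2 \<in> ball a r" unfolding z1_def z2_def using that
        by (simp_all add: dist_norm algebra_simps)
    qed
    then have "z1 \<in> G m" "z2 \<in> G m" using r by auto
    then have n1: "norm (F n z1) \<le> real m" and n2: "norm (F n (2 *\<^sub>R y - z2)) \<le> real m"
      unfolding G_def by auto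
    have "z1 + (2 *\<^sub>R y - z2) = 2 *\<^sub>R b" by (simp add: z1_def z2_def algebra_simps scaleR_2)
    then have "(1/2) *\<^sub>R (z1 + (2 *\<^sub>R y - z2)) = b" by simp
    then have eb: "b = (1/2) *\<^sub>R z1 + (1/2) *\<^sub>R (2 *\<^sub>R y - z2)"
      by (simp only: scaleR_add_right)
    have "F n b \<le> (1/2) *\<^sub>R F n z1 + (1/2) *\<^sub>R F n (2 *\<^sub>R y - z2)"
      unfolding eb by (rule conv_half[OF cF])
    moreover have "norm ((1/2) *\<^sub>R F n z1 + (1/2) *\<^sub>R F n (2 *\<^sub>R y - z2)) \<le> real m"
    proof -
      have "norm ((1/2) *\<^sub>R F n z1 + (1/2) *\<^sub>R F n (2 *\<^sub>R y - z2))
          \<le> norm ((1/2) *\<^sub>R F n z1) + norm ((1/2) *\<^sub>R F n (2 *\<^sub>R y - z2))" by (rule norm_triangle_ineq)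
      also have "\<dots> = (1/2) * norm (F n z1) + (1/2) * norm (F n (2 *\<^sub>R y - z2))" by simp
      also have "\<dots> \<le> real m" using n1 n2 by simp
      finally show ?thesis .
    qed
    ultimately show ?thesis by blast
  qed
  obtain K where K: "\<forall>n. norm (F n y) \<le> K" using ptb by blast
  have "norm (F n b) \<le> 2 * K + 2 * real m" if "norm (b - y) \<le> r/2" for n b
  proof -
    have b1: "norm (b - y) < r" using that r by linarith
    have b2: "norm ((2 *\<^sub>R y - b) - y) < r" using b1 by (simp add: norm_minus_commute algebra_simps scaleR_2)
    obtain u1 where u1: "F n b \<le> u1" "norm u1 \<le> real m" using upper[OF b1] by blast
    obtain u2 where u2: "F n (2 *\<^sub>R y - b) \<le> u2" "norm u2 \<le> real m" using upper[OF b2] by blast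
    have "b + (2 *\<^sub>R y - b) = 2 *\<^sub>R y" by simp
    then have "(1/2) *\<^sub>R (b + (2 *\<^sub>R y - b)) = y" by simp
    then have ey: "y = (1/2) *\<^sub>R b + (1/2) *\<^sub>R (2 *\<^sub>R y - b)"
      by (simp only: scaleR_add_right)
    have "F n y \<le> (1/2) *\<^sub>R F n b + (1/2) *\<^sub>R F n (2 *\<^sub>R y - b)"
      by (subst ey) (rule conv_half[OF cF])
    then have "2 *\<^sub>R F n y \<le> (2::real) *\<^sub>R ((1/2) *\<^sub>R F n b + (1/2) *\<^sub>R F n (2 *\<^sub>R y - b))"
      by (rule scaleR_left_mono) simp
    then have h1: "2 *\<^sub>R F n y \<le> F n b + F n (2 *\<^sub>R y - b)"
      by (simp only: scaleR_add_right scaleR_scaleR) simp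
    have "F n b + F n (2 *\<^sub>R y - b) \<le> F n b + u2" using u2(1) by (rule add_left_mono)
    with h1 have "2 *\<^sub>R F n y \<le> F n b + u2" by (rule order.trans)
    then have "2 *\<^sub>R F n y - u2 \<le> F n b" by (simp add: diff_le_eq)
    then have "norm (F n b) \<le> norm (2 *\<^sub>R F n y - u2) + norm u1" using u1(1) by (rule bl_norm_between)
    also have "\<dots> \<le> (2 * K + real m) + real m"
    proof -
      have "norm (2 *\<^sub>R F n y - u2) \<le> norm (2 *\<^sub>R F n y) + norm u2" by (rule norm_triangle_ineq4)
      also have "\<dots> \<le> 2 * K + real m" using spec[OF K, of n] u2(2) by simp
      finally show ?thesis using u1(2) by linarith
    qed
    finally show ?thesis by simp
  qed
  moreover have "r/2 > 0" using r(1) by simp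
  ultimately show ?thesis by blast
qed

lemma small_inv: "0 < (d::real) \<Longrightarrow> \<exists>N::nat. \<forall>n\<ge>N. 1 / (real n + 1) < d"
proof -
  assume d: "0 < d"
  obtain N :: nat where N: "1 / d < real N" using reals_Archimedean2 by blast
  have "1 / (real n + 1) < d" if "n \<ge> N" for n
  proof -
    have "1 / d < real n + 1" using N that by linarith
    then have "1 < d * (real n + 1)" using d by (simp add: field_simps)
    then show ?thesis by (simp add: field_simps)
  qed
  then show ?thesis by blast
qed

lemma LSB:
  assumes S: "convex_C0_semigroup S"
  shows "\<exists>\<delta>>0. \<exists>\<epsilon>>0. \<exists>M. \<forall>r a. 0 \<le> r \<and> r \<le> \<delta> \<and> norm (a - y) \<le> \<epsilon> \<longrightarrow> norm (S r a) \<le> M"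
proof (rule ccontr)
  assume neg: "\<not> ?thesis"
  have "\<exists>r a. 0 \<le> r \<and> r \<le> 1/(real n+1) \<and> norm (a - y) \<le> 1/(real n+1) \<and> real n < norm (S r a)" for n :: nat
  proof (rule ccontr)
    assume "\<not> ?thesis"
    then have "\<forall>r a. 0 \<le> r \<and> r \<le> 1/(real n+1) \<and> norm (a - y) \<le> 1/(real n+1) \<longrightarrow> norm (S r a) \<le> real n"
      by (simp add: not_less)
    moreover have "1/(real n+1) > 0" by simp
    ultimately show False using neg by blast
  qed
  then obtain \<rho> a where H: "\<And>n. 0 \<le> \<rho> n \<and> \<rho> n \<le> 1/(real n+1) \<and> norm (a n - y) \<le> 1/(real n+1) \<and> real n < norm (S (\<rho> n) (a n))"
    by metis
  define F where "F n = S (\<rho> n)" for n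
  have cF: "convex_operator (F n)" for n unfolding F_def using H sg_conv[OF S] by blast
  have contF: "continuous_on UNIV (F n)" for n unfolding F_def
    by (intro continuous_at_imp_continuous_on ballI sg_isCont[OF S]) (use H in blast)
  have ptb: "\<exists>K. \<forall>n. norm (F n z) \<le> K" for z
  proof -
    have "(\<lambda>n. F n z) \<longlonglongrightarrow> z"
    proof (rule LIMSEQ_I)
      fix e :: real assume e: "0 < e"
      obtain d where d: "d > 0" "\<forall>r. 0 \<le> r \<and> r < d \<longrightarrow> norm (S r z - z) < e"
        using sg_sc0[OF S e] by blast
      obtain N where N: "\<forall>n\<ge>N. 1 / (real n + 1) < d" using small_inv[OF d(1)] by blast
      have "norm (F n z - z) < e" if "n \<ge> N" for n
      proof -
        have "1 / (real n + 1) < d" using N that by blast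
        then have "\<rho> n < d" using H[of n] by linarith
        then show ?thesis unfolding F_def using d(2) H[of n] by blast
      qed
      then show "\<exists>no. \<forall>n\<ge>no. norm (F n z - z) < e" by blast
    qed
    then have "Bseq (\<lambda>n. F n z)" by (intro convergent_imp_Bseq convergentI)
    then show ?thesis unfolding Bseq_def by blast
  qed
  obtain \<epsilon> M where eM: "\<epsilon> > 0" "\<forall>n b. norm (b - y) \<le> \<epsilon> \<longrightarrow> norm (F n b) \<le> M"
    using baire_conv[OF cF contF ptb, of y] by blast
  obtain N1 :: nat where N1: "M < real N1" using reals_Archimedean2 by blast
  obtain N2 where N2: "\<forall>n\<ge>N2. 1 / (real n + 1) < \<epsilon>" using small_inv[OF eM(1)] by blast
  define n where "n = max N1 N2"
  have "norm (a n - y) \<le> \<epsilon>" using H[of n] N2 unfolding n_def by (meson max.cobounded2 order.trans less_imp_le)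
  then have "norm (F n (a n)) \<le> M" using eM(2) by blast
  moreover have "real n < norm (F n (a n))" using H[of n] unfolding F_def by blast
  moreover have "M < real n" using N1 unfolding n_def by linarith
  ultimately show False by linarith
qed

lemma LSL:
  assumes S: "convex_C0_semigroup S"
  shows "\<exists>\<delta>>0. \<exists>\<epsilon>>0. \<exists>L M. \<forall>r a b. 0 \<le> r \<and> r \<le> \<delta> \<and> norm (a - y) \<le> \<epsilon> \<and> norm (b - y) \<le> \<epsilon> \<longrightarrow>
      norm (S r b - S r a) \<le> L * norm (b - a) \<and> norm (S r a) \<le> M"
proof -
  obtain \<delta> \<epsilon> M where H: "\<delta> > 0" "\<epsilon> > 0" "\<forall>r a. 0 \<le> r \<and> r \<le> \<delta> \<and> norm (a - y) \<le> \<epsilon> \<longrightarrow> norm (S r a) \<le> M"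
    using LSB[OF S, of y] by blast
  have "norm (S r b - S r a) \<le> (8 * M / \<epsilon>) * norm (b - a) \<and> norm (S r a) \<le> M"
    if "0 \<le> r" "r \<le> \<delta>" "norm (a - y) \<le> \<epsilon>/2" "norm (b - y) \<le> \<epsilon>/2" for r a b
  proof
    show "norm (S r b - S r a) \<le> (8 * M / \<epsilon>) * norm (b - a)"
      by (rule conv_lipschitz[where c=y]) (use that H sg_conv[OF S] in auto)
    show "norm (S r a) \<le> M" using that H by auto
  qed
  moreover have "\<epsilon>/2 > 0" using H by simp
  ultimately show ?thesis using H(1) by blast
qed

lemma gen_invariant:
  fixes T :: "real \<Rightarrow> 'a::banach_lattice \<Rightarrow> 'a"
  assumes oc: "order_continuous_norm TYPE('a)" and T: "convex_C0_semigroup T"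
    and xD: "x \<in> generator_domain T" and s: "0 \<le> s"
  shows "T s x \<in> generator_domain T"
proof -
  define vh where "vh h = (1/h) *\<^sub>R (T h x - x)" for h
  obtain v where v: "(vh \<longlongrightarrow> v) (at_right 0)" using xD unfolding generator_domain_def vh_def by blast
  define F where "F = T s"
  have cF: "convex_operator F" and bF: "bounded_operator F" unfolding F_def using sg_conv[OF T s] sg_bdd[OF T s] by auto
  define q where "q h = (1/h) *\<^sub>R (F (x + h *\<^sub>R v) - F x)" for h
  obtain l where l: "(q \<longlongrightarrow> l) (at_right 0)"
  proof -
    have "\<exists>l. (q \<longlongrightarrow> l) (at_right 0)"
    proof (rule oc_mono_lim[OF oc])
      show "q h \<le> q h'" if "0 < h" "h \<le> h'" "h' \<le> 1" for h h'
        unfolding q_def by (rule conv_quot_mono[OF cF]) (use that in auto)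
      show "F x - F (x - v) \<le> q h" if "0 < h" "h \<le> 1" for h
        unfolding q_def by (rule conv_quot_lower[OF cF]) (use that in auto)
    qed
    then show ?thesis using that by blast
  qed
  define R where "R = norm x + norm v + 1"
  have R: "0 < R" unfolding R_def by (simp add: add_nonneg_pos)
  obtain L where L: "\<And>a b. norm a \<le> R \<Longrightarrow> norm b \<le> R \<Longrightarrow> norm (F b - F a) \<le> L * norm (b - a)"
    using lip_ball[OF cF bF R] by blast
  define E where "E h = (1/h) *\<^sub>R (F (x + h *\<^sub>R vh h) - F (x + h *\<^sub>R v))" for h
  have E: "(E \<longlongrightarrow> 0) (at_right 0)"
  proof (rule Lim_null_comparison)
    have ev1: "\<forall>\<^sub>F h in at_right 0. dist (vh h) v < 1" using v by (rule tendstoD) simp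
    have ev2: "\<forall>\<^sub>F h in at_right (0::real). 0 < h \<and> h < 1"
      unfolding eventually_at_right_field by (intro exI[of _ 1]) simp
    show "\<forall>\<^sub>F h in at_right 0. norm (E h) \<le> L * norm (vh h - v)"
      using ev1 ev2
    proof (rule eventually_elim2)
      fix h :: real assume h1: "dist (vh h) v < 1" and h2: "0 < h \<and> h < 1"
      have nvh: "norm (vh h) \<le> norm v + 1" using h1 norm_triangle_ineq2[of "vh h" v] by (simp add: dist_norm)
      have a: "norm (x + h *\<^sub>R v) \<le> R"
      proof -
        have "norm (x + h *\<^sub>R v) \<le> norm x + h * norm v" using h2 norm_triangle_ineq[of x "h *\<^sub>R v"] by simp
        also have "h * norm v \<le> 1 * norm v" using h2 by (intro mult_right_mono) auto
        finally show ?thesis unfolding R_def by simp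
      qed
      have b: "norm (x + h *\<^sub>R vh h) \<le> R"
      proof -
        have "norm (x + h *\<^sub>R vh h) \<le> norm x + h * norm (vh h)" using h2 norm_triangle_ineq[of x "h *\<^sub>R vh h"] by simp
        also have "h * norm (vh h) \<le> 1 * (norm v + 1)" using h2 nvh by (intro mult_mono) auto
        finally show ?thesis unfolding R_def by simp
      qed
      have "norm (E h) = (1/h) * norm (F (x + h *\<^sub>R vh h) - F (x + h *\<^sub>R v))" unfolding E_def using h2 by simp
      also have "\<dots> \<le> (1/h) * (L * norm ((x + h *\<^sub>R vh h) - (x + h *\<^sub>R v)))"
        using L[OF a b] h2 by (intro mult_left_mono) auto
      also have "(x + h *\<^sub>R vh h) - (x + h *\<^sub>R v) = h *\<^sub>R (vh h - v)" by (simp add: algebra_simps)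
      also have "(1/h) * (L * norm (h *\<^sub>R (vh h - v))) = L * norm (vh h - v)" using h2 by simp
      finally show "norm (E h) \<le> L * norm (vh h - v)" .
    qed
    have "((\<lambda>h. norm (vh h - v)) \<longlongrightarrow> 0) (at_right 0)"
      by (rule tendsto_norm_zero, rule LIM_zero, rule v)
    from tendsto_mult[OF tendsto_const this, of L]
    show "((\<lambda>h. L * norm (vh h - v)) \<longlongrightarrow> 0) (at_right 0)" by simp
  qed
  have sum: "((\<lambda>h. E h + q h) \<longlongrightarrow> 0 + l) (at_right 0)" by (rule tendsto_add[OF E l])
  have eq: "\<forall>\<^sub>F h in at_right 0. E h + q h = (1/h) *\<^sub>R (T h (T s x) - T s x)"
  proof -
    have "\<forall>\<^sub>F h in at_right (0::real). 0 < h" by (rule eventually_at_right_less)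
    then show ?thesis
    proof (rule eventually_mono)
      fix h :: real assume h: "0 < h"
      have "T h (T s x) = T (h + s) x" using sg_add[OF T s, of h x] h by simp
      also have "\<dots> = T s (T h x)" using sg_add[OF T, of h s x] h s by (simp add: add.commute)
      also have "T h x = x + h *\<^sub>R vh h" unfolding vh_def using h by simp
      finally have th: "T h (T s x) = F (x + h *\<^sub>R vh h)" unfolding F_def .
      show "E h + q h = (1/h) *\<^sub>R (T h (T s x) - T s x)"
        unfolding th E_def q_def F_def by (simp add: algebra_simps)
    qed
  qed
  have "((\<lambda>h. (1/h) *\<^sub>R (T h (T s x) - T s x)) \<longlongrightarrow> l) (at_right 0)"
    using Lim_transform_eventually[OF sum eq] by simp
  then show ?thesis unfolding generator_domain_def by blast
qed

lemma right_deriv_zero_bound: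
  fixes f :: "real \<Rightarrow> 'b::real_normed_vector"
  assumes ab: "a \<le> b" and cont: "continuous_on {a..b} f"
    and rd: "\<And>s. a \<le> s \<Longrightarrow> s < b \<Longrightarrow> ((\<lambda>h. (1/h) *\<^sub>R (f (s + h) - f s)) \<longlongrightarrow> 0) (at_right 0)"
    and eps: "0 < \<epsilon>"
  shows "norm (f b - f a) \<le> \<epsilon> * (b - a)"
proof -
  define P where "P r \<longleftrightarrow> norm (f r - f a) \<le> \<epsilon> * (r - a)" for r
  define K where "K = {s. a \<le> s \<and> s \<le> b \<and> (\<forall>r. a \<le> r \<and> r \<le> s \<longrightarrow> P r)}"
  have Pa: "P a" unfolding P_def by simp
  have aK: "a \<in> K" unfolding K_def using ab Pa by auto
  have Kne: "K \<noteq> {}" using aK by blast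
  have bdd: "bdd_above K" unfolding K_def bdd_above_def by auto
  define \<sigma> where "\<sigma> = Sup K"
  have a\<sigma>: "a \<le> \<sigma>" unfolding \<sigma>_def by (rule cSup_upper[OF aK bdd])
  have \<sigma>b: "\<sigma> \<le> b" unfolding \<sigma>_def by (rule cSup_least[OF Kne]) (auto simp: K_def)
  have below: "P r" if ar: "a \<le> r" and r\<sigma>: "r < \<sigma>" for r
  proof -
    have "\<exists>s\<in>K. r < s" using less_cSupD[OF Kne, of r] r\<sigma> unfolding \<sigma>_def by blast
    then obtain s where "s \<in> K" "r < s" by blast
    then show ?thesis unfolding K_def using ar by auto
  qed
  have P\<sigma>: "P \<sigma>"
  proof (cases "\<sigma> = a")
    case True then show ?thesis using Pa by simp
  next
    case False
    then have a\<sigma>': "a < \<sigma>" using a\<sigma> by simp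
    have "norm (f \<sigma> - f a) \<le> \<epsilon> * (\<sigma> - a) + e" if e: "0 < e" for e
    proof -
      have "\<sigma> \<in> {a..b}" using a\<sigma> \<sigma>b by simp
      then obtain d where d: "d > 0" "\<forall>r\<in>{a..b}. dist r \<sigma> < d \<longrightarrow> dist (f r) (f \<sigma>) < e"
        using cont e unfolding continuous_on_iff by blast
      define r where "r = max a (\<sigma> - d/2)"
      have r: "a \<le> r" "r < \<sigma>" "r \<in> {a..b}" "dist r \<sigma> < d" unfolding r_def using a\<sigma>' d \<sigma>b
        by (auto simp: dist_real_def)
      have 1: "norm (f r - f \<sigma>) < e" using d(2) r by (simp add: dist_norm)
      have 2: "norm (f r - f a) \<le> \<epsilon> * (r - a)" using below[OF r(1) r(2)] unfolding P_def .
      have 3: "\<epsilon> * (r - a) \<le> \<epsilon> * (\<sigma> - a)" using r eps by (intro mult_left_mono) auto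
      have "norm (f \<sigma> - f a) \<le> norm (f r - f \<sigma>) + norm (f r - f a)"
        using norm_triangle_ineq4[of "f r - f \<sigma>" "f r - f a"] by (simp add: norm_minus_commute)
      then show ?thesis using 1 2 3 by linarith
    qed
    then show ?thesis unfolding P_def by (rule field_le_epsilon)
  qed
  have "\<sigma> = b"
  proof (rule ccontr)
    assume "\<sigma> \<noteq> b"
    then have \<sigma>b': "\<sigma> < b" using \<sigma>b by simp
    have "\<forall>\<^sub>F h in at_right 0. dist ((1/h) *\<^sub>R (f (\<sigma> + h) - f \<sigma>)) 0 < \<epsilon>"
      using rd[OF a\<sigma> \<sigma>b'] eps by (rule tendstoD)
    then obtain c where c: "c > 0" "\<And>h. h > 0 \<Longrightarrow> h < c \<Longrightarrow> dist ((1/h) *\<^sub>R (f (\<sigma> + h) - f \<sigma>)) 0 < \<epsilon>"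
      unfolding eventually_at_right_field by auto
    define h where "h = min (c/2) (b - \<sigma>)"
    have h: "0 < h" "h < c" "\<sigma> + h \<le> b" unfolding h_def using c \<sigma>b' by auto
    have "\<sigma> + h \<in> K" unfolding K_def
    proof (intro CollectI conjI allI impI)
      show "a \<le> \<sigma> + h" using a\<sigma> h by simp
      show "\<sigma> + h \<le> b" by fact
      fix r assume r: "a \<le> r \<and> r \<le> \<sigma> + h"
      show "P r"
      proof (cases "r < \<sigma>")
        case True then show ?thesis using below r by blast
      next
        case False
        show ?thesis
        proof (cases "r = \<sigma>")
          case True then show ?thesis using P\<sigma> by simp
        next
          case False2: False
          define h' where "h' = r - \<sigma>"
          have h': "0 < h'" "h' < c" using False False2 r h unfolding h'_def by auto
          have "norm ((1/h') *\<^sub>R (f (\<sigma> + h') - f \<sigma>)) < \<epsilon>" using c(2)[OF h'] by simp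
          then have "(1/h') * norm (f (\<sigma> + h') - f \<sigma>) < \<epsilon>" using h' by simp
          then have "norm (f (\<sigma> + h') - f \<sigma>) < \<epsilon> * h'" using h' by (simp add: field_simps)
          then have 1: "norm (f r - f \<sigma>) \<le> \<epsilon> * (r - \<sigma>)" unfolding h'_def by simp
          have 2: "norm (f \<sigma> - f a) \<le> \<epsilon> * (\<sigma> - a)" using P\<sigma> unfolding P_def .
          have "norm (f r - f a) \<le> norm (f r - f \<sigma>) + norm (f \<sigma> - f a)"
            using norm_triangle_ineq[of "f r - f \<sigma>" "f \<sigma> - f a"] by simp
          also have "\<dots> \<le> \<epsilon> * (r - \<sigma>) + \<epsilon> * (\<sigma> - a)" using 1 2 by linarith
          also have "\<dots> = \<epsilon> * (r - a)" by (simp add: algebra_simps)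
          finally show ?thesis unfolding P_def .
        qed
      qed
    qed
    then have "\<sigma> + h \<le> \<sigma>" unfolding \<sigma>_def by (rule cSup_upper[OF _ bdd])
    then show False using h by simp
  qed
  then show ?thesis using P\<sigma> unfolding P_def by simp
qed

lemma right_deriv_zero_const:
  fixes f :: "real \<Rightarrow> 'b::real_normed_vector"
  assumes ab: "a \<le> b" and cont: "continuous_on {a..b} f"
    and rd: "\<And>s. a \<le> s \<Longrightarrow> s < b \<Longrightarrow> ((\<lambda>h. (1/h) *\<^sub>R (f (s + h) - f s)) \<longlongrightarrow> 0) (at_right 0)"
  shows "f b = f a"
proof -
  have "norm (f b - f a) \<le> 0 + e" if "0 < e" for e
  proof -
    have "norm (f b - f a) \<le> (e / (b - a + 1)) * (b - a)"
      by (rule right_deriv_zero_bound[OF ab cont rd]) (use that ab in auto)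
    also have "\<dots> \<le> e"
    proof -
      have "(e / (b - a + 1)) * (b - a) \<le> (e / (b - a + 1)) * (b - a + 1)"
        using that ab by (intro mult_left_mono) auto
      also have "\<dots> = e" using ab by simp
      finally show ?thesis .
    qed
    finally show ?thesis by simp
  qed
  then have "norm (f b - f a) \<le> 0" by (rule field_le_epsilon)
  then show ?thesis by simp
qed

lemma LSL':
  assumes S: "convex_C0_semigroup S"
  shows "\<exists>\<delta>>0. \<exists>\<epsilon>>0. \<exists>L\<ge>0. \<exists>M. \<forall>r a b. 0 \<le> r \<and> r \<le> \<delta> \<and> norm (a - y) \<le> \<epsilon> \<and> norm (b - y) \<le> \<epsilon> \<longrightarrow>
      norm (S r b - S r a) \<le> L * norm (b - a) \<and> norm (S r a) \<le> M"
proof -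
  obtain \<delta> \<epsilon> L M where H: "\<delta> > 0" "\<epsilon> > 0" "\<forall>r a b. 0 \<le> r \<and> r \<le> \<delta> \<and> norm (a - y) \<le> \<epsilon> \<and> norm (b - y) \<le> \<epsilon> \<longrightarrow>
      norm (S r b - S r a) \<le> L * norm (b - a) \<and> norm (S r a) \<le> M"
    using LSL[OF S, of y] by blast
  have "norm (S r b - S r a) \<le> max L 0 * norm (b - a) \<and> norm (S r a) \<le> M"
    if "0 \<le> r \<and> r \<le> \<delta> \<and> norm (a - y) \<le> \<epsilon> \<and> norm (b - y) \<le> \<epsilon>" for r a b
  proof -
    have "L * norm (b - a) \<le> max L 0 * norm (b - a)" by (intro mult_right_mono) auto
    then show ?thesis using H(3) that by fastforce
  qed
  moreover have "max L 0 \<ge> 0" by simp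
  ultimately show ?thesis using H(1,2) by blast
qed

lemma lip_ball':
  fixes F :: "'a::banach_lattice \<Rightarrow> 'a"
  assumes cF: "convex_operator F" and bF: "bounded_operator F" and R: "0 < R"
  shows "\<exists>L\<ge>0. \<forall>a b. norm a \<le> R \<longrightarrow> norm b \<le> R \<longrightarrow> norm (F b - F a) \<le> L * norm (b - a)"
proof -
  obtain L where L: "\<forall>a b. norm a \<le> R \<longrightarrow> norm b \<le> R \<longrightarrow> norm (F b - F a) \<le> L * norm (b - a)"
    using lip_ball[OF cF bF R] by blast
  have "norm (F b - F a) \<le> max L 0 * norm (b - a)" if "norm a \<le> R" "norm b \<le> R" for a b
  proof -
    have "L * norm (b - a) \<le> max L 0 * norm (b - a)" by (intro mult_right_mono) auto
    then show ?thesis using L that by fastforce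
  qed
  moreover have "max L 0 \<ge> 0" by simp
  ultimately show ?thesis by blast
qed

lemma u_left_cont:
  assumes T: "convex_C0_semigroup T" and s: "0 < s" and e: "0 < e"
  shows "\<exists>d>0. \<forall>h. 0 < h \<and> h < d \<and> h \<le> s \<longrightarrow> norm (T (s - h) x - T s x) < e"
proof -
  obtain \<delta> \<epsilon> L M where H: "\<delta> > 0" "\<epsilon> > 0" "L \<ge> 0" "\<forall>r a b. 0 \<le> r \<and> r \<le> \<delta> \<and> norm (a - x) \<le> \<epsilon> \<and> norm (b - x) \<le> \<epsilon> \<longrightarrow>
      norm (T r b - T r a) \<le> L * norm (b - a) \<and> norm (T r a) \<le> M"
    using LSL'[OF T, of x] by blast
  define \<delta>' where "\<delta>' = min \<delta> s"
  have d': "0 < \<delta>'" "\<delta>' \<le> \<delta>" "\<delta>' \<le> s" unfolding \<delta>'_def using H s by auto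
  define G where "G = T (s - \<delta>')"
  define p where "p = T \<delta>' x"
  have "isCont G p" unfolding G_def using sg_isCont[OF T] d' by simp
  then obtain \<eta> where \<eta>: "\<eta> > 0" "\<forall>q. dist q p < \<eta> \<longrightarrow> dist (G q) (G p) < e"
    using e unfolding continuous_at_eps_delta by blast
  define e' where "e' = min \<epsilon> (\<eta> / (L + 1))"
  have e': "0 < e'" unfolding e'_def using H \<eta> by simp
  obtain d1 where d1: "d1 > 0" "\<forall>r. 0 \<le> r \<and> r < d1 \<longrightarrow> norm (T r x - x) < e'"
    using sg_sc0[OF T e'] by blast
  define d where "d = min d1 \<delta>'"
  have "norm (T (s - h) x - T s x) < e'' " if h: "0 < h" "h < d" "h \<le> s" and "e'' = e" for h e''
  proof -
    have hd: "h < d1" "h \<le> \<delta>'" using h unfolding d_def by auto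
    have n1: "norm (T h x - x) < e'" using d1(2) hd h by auto
    have "norm (T (\<delta>' - h) (T h x) - T (\<delta>' - h) x) \<le> L * norm (T h x - x)"
      using H(4)[rule_format, of "\<delta>' - h" x "T h x"] hd d' h H(2) n1 unfolding e'_def by auto
    also have "\<dots> \<le> L * (\<eta> / (L + 1))" using n1 H(3) unfolding e'_def by (intro mult_left_mono) auto
    also have "\<dots> < \<eta>"
    proof -
      have "L * (\<eta> / (L + 1)) = \<eta> * (L / (L + 1))" by simp
      also have "\<dots> < \<eta> * 1" using \<eta> H(3) by (intro mult_strict_left_mono) auto
      finally show ?thesis by simp
    qed
    finally have lt: "norm (T (\<delta>' - h) (T h x) - T (\<delta>' - h) x) < \<eta>" .
    have pe: "T (\<delta>' - h) (T h x) = p" unfolding p_def using sg_add[OF T, of h "\<delta>' - h" x] h hd by simp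
    have "dist (T (\<delta>' - h) x) p < \<eta>" using lt pe by (simp add: dist_norm norm_minus_commute)
    then have "dist (G (T (\<delta>' - h) x)) (G p) < e" using \<eta>(2) by blast
    moreover have "G (T (\<delta>' - h) x) = T (s - h) x"
      unfolding G_def using sg_add[OF T, of "\<delta>' - h" "s - \<delta>'" x] h hd d' by simp
    moreover have "G p = T s x" unfolding G_def p_def using sg_add[OF T, of "\<delta>'" "s - \<delta>'" x] d' by simp
    ultimately show ?thesis using that by (simp add: dist_norm)
  qed
  moreover have "d > 0" unfolding d_def using d1 d' by simp
  ultimately show ?thesis by blast
qed

lemma w_left_cont:
  assumes S: "convex_C0_semigroup S" and T: "convex_C0_semigroup T"
    and s: "0 < s" "s \<le> t" and e: "0 < e"
  shows "\<exists>d>0. \<forall>h. 0 < h \<and> h < d \<and> h \<le> s \<longrightarrow>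
           norm (S (t - (s - h)) (T (s - h) x) - S (t - s) (T s x)) < e"
proof -
  define y where "y = T s x"
  obtain \<delta> \<epsilon> L M where H: "\<delta> > 0" "\<epsilon> > 0" "L \<ge> 0" "\<forall>r a b. 0 \<le> r \<and> r \<le> \<delta> \<and> norm (a - y) \<le> \<epsilon> \<and> norm (b - y) \<le> \<epsilon> \<longrightarrow>
      norm (S r b - S r a) \<le> L * norm (b - a) \<and> norm (S r a) \<le> M"
    using LSL'[OF S, of y] by blast
  have "isCont (S (t - s)) y" using sg_isCont[OF S] s by simp
  then obtain \<eta> where \<eta>: "\<eta> > 0" "\<forall>q. dist q y < \<eta> \<longrightarrow> dist (S (t - s) q) (S (t - s) y) < e"
    using e unfolding continuous_at_eps_delta by blast
  have \<eta>2: "0 < \<eta>/2" using \<eta> by simp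
  obtain d1 where d1: "d1 > 0" "\<forall>r. 0 \<le> r \<and> r < d1 \<longrightarrow> norm (S r y - y) < \<eta>/2"
    using sg_sc0[OF S \<eta>2] by blast
  define e' where "e' = min \<epsilon> (\<eta> / (2 * (L + 1)))"
  have e': "0 < e'" unfolding e'_def using H \<eta> by simp
  obtain d2 where d2: "d2 > 0" "\<forall>h. 0 < h \<and> h < d2 \<and> h \<le> s \<longrightarrow> norm (T (s - h) x - T s x) < e'"
    using u_left_cont[OF T s(1) e'] by blast
  define d where "d = min (min d1 d2) \<delta>"
  have "norm (S (t - (s - h)) (T (s - h) x) - S (t - s) (T s x)) < e"
    if h: "0 < h" "h < d" "h \<le> s" for h
  proof -
    have hd: "h < d1" "h < d2" "h < \<delta>" using h unfolding d_def by auto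
    define b where "b = T (s - h) x"
    have nb: "norm (b - y) < e'" unfolding b_def y_def using d2(2) h hd by blast
    have "norm (S h b - S h y) \<le> L * norm (b - y)"
      using H(4)[rule_format, of h y b] h hd nb H(2) unfolding e'_def by auto
    also have "\<dots> \<le> L * (\<eta> / (2 * (L + 1)))" using nb H(3) unfolding e'_def by (intro mult_left_mono) auto
    also have "\<dots> < \<eta>/2"
    proof -
      have "L * (\<eta> / (2 * (L + 1))) = (\<eta>/2) * (L / (L + 1))" by simp
      also have "\<dots> < (\<eta>/2) * 1" using \<eta> H(3) by (intro mult_strict_left_mono) auto
      finally show ?thesis by simp
    qed
    finally have 1: "norm (S h b - S h y) < \<eta>/2" .
    have 2: "norm (S h y - y) < \<eta>/2" using d1(2) h hd by auto
    have "norm (S h b - y) \<le> norm (S h b - S h y) + norm (S h y - y)"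
      using norm_triangle_ineq[of "S h b - S h y" "S h y - y"] by simp
    then have "dist (S h b) y < \<eta>" using 1 2 by (simp add: dist_norm)
    then have "dist (S (t - s) (S h b)) (S (t - s) y) < e" using \<eta>(2) by blast
    moreover have "S (t - s) (S h b) = S (t - (s - h)) b"
      using sg_add[OF S, of h "t - s" b] h s by (simp add: algebra_simps)
    ultimately show ?thesis unfolding b_def y_def by (simp add: dist_norm)
  qed
  moreover have "d > 0" unfolding d_def using d1 d2 H by simp
  ultimately show ?thesis by blast
qed

lemma w_rd:
  assumes S: "convex_C0_semigroup S" and T: "convex_C0_semigroup T"
    and s: "0 \<le> s" "s < t"
    and quot: "((\<lambda>h. (1/h) *\<^sub>R (T h (T s x) - S h (T s x))) \<longlongrightarrow> 0) (at_right 0)"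
  shows "((\<lambda>h. (1/h) *\<^sub>R (S (t - (s + h)) (T (s + h) x) - S (t - s) (T s x))) \<longlongrightarrow> 0) (at_right 0)"
proof -
  define y where "y = T s x"
  obtain \<delta> \<epsilon> L M where H: "\<delta> > 0" "\<epsilon> > 0" "L \<ge> 0" "\<forall>r a b. 0 \<le> r \<and> r \<le> \<delta> \<and> norm (a - y) \<le> \<epsilon> \<and> norm (b - y) \<le> \<epsilon> \<longrightarrow>
      norm (S r b - S r a) \<le> L * norm (b - a) \<and> norm (S r a) \<le> M"
    using LSL'[OF S, of y] by blast
  define \<delta>' where "\<delta>' = min \<delta> (t - s)"
  have d': "0 < \<delta>'" "\<delta>' \<le> \<delta>" "\<delta>' \<le> t - s" unfolding \<delta>'_def using H s by auto
  define G where "G = S (t - s - \<delta>')"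
  have R: "0 < \<bar>M\<bar> + 1" by simp
  obtain LG where LG: "LG \<ge> 0" "\<forall>a b. norm a \<le> \<bar>M\<bar> + 1 \<longrightarrow> norm b \<le> \<bar>M\<bar> + 1 \<longrightarrow> norm (G b - G a) \<le> LG * norm (b - a)"
    using lip_ball'[OF _ _ R, of G] sg_conv[OF S] sg_bdd[OF S] d' unfolding G_def by auto
  obtain dT where dT: "dT > 0" "\<forall>r. 0 \<le> r \<and> r < dT \<longrightarrow> norm (T r y - y) < \<epsilon>"
    using sg_sc0[OF T H(2)] by blast
  obtain dS where dS: "dS > 0" "\<forall>r. 0 \<le> r \<and> r < dS \<longrightarrow> norm (S r y - y) < \<epsilon>"
    using sg_sc0[OF S H(2)] by blast
  define d where "d = min (min dT dS) \<delta>'"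
  have d: "d > 0" unfolding d_def using dT dS d' by simp
  show ?thesis
  proof (rule Lim_null_comparison)
    have "((\<lambda>h. norm ((1/h) *\<^sub>R (T h y - S h y))) \<longlongrightarrow> 0) (at_right 0)"
      using tendsto_norm_zero[OF quot] unfolding y_def .
    from tendsto_mult[OF tendsto_const this, of "LG * L"]
    show "((\<lambda>h. (LG * L) * norm ((1/h) *\<^sub>R (T h y - S h y))) \<longlongrightarrow> 0) (at_right 0)" by simp
    show "\<forall>\<^sub>F h in at_right 0. norm ((1/h) *\<^sub>R (S (t - (s + h)) (T (s + h) x) - S (t - s) (T s x)))
        \<le> (LG * L) * norm ((1/h) *\<^sub>R (T h y - S h y))"
      unfolding eventually_at_right_field
    proof (intro exI[of _ d] conjI allI impI)
      show "0 < d" by fact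
      fix h :: real assume h: "0 < h" "h < d"
      have hd: "h < dT" "h < dS" "h < \<delta>'" using h unfolding d_def by auto
      define a where "a = S h y"
      define b where "b = T h y"
      define r where "r = \<delta>' - h"
      have r: "0 \<le> r" "r \<le> \<delta>" unfolding r_def using hd d' h by auto
      have na: "norm (a - y) \<le> \<epsilon>" unfolding a_def using dS(2) h hd by (meson less_imp_le order.strict_implies_order)
      have nb: "norm (b - y) \<le> \<epsilon>" unfolding b_def using dT(2) h hd by (meson less_imp_le order.strict_implies_order)
      have lipr: "norm (S r b - S r a) \<le> L * norm (b - a)" and Ma: "norm (S r a) \<le> M" and Mb: "norm (S r b) \<le> M"
        using H(4)[rule_format, of r a b] H(4)[rule_format, of r b a] r na nb by auto
      have e1: "S (t - (s + h)) (T (s + h) x) = G (S r b)"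
      proof -
        have "T (s + h) x = b" unfolding b_def y_def using sg_add[OF T, of s h x] s h by (simp add: add.commute)
        moreover have "S (t - (s + h)) z = G (S r z)" for z
          unfolding G_def r_def using sg_add[OF S, of "\<delta>' - h" "t - s - \<delta>'" z] hd d' h
          by (simp add: algebra_simps)
        ultimately show ?thesis by simp
      qed
      have e2: "S (t - s) (T s x) = G (S r a)"
      proof -
        have "S (t - s) y = S (t - s - h) (S h y)" using sg_add[OF S, of h "t - s - h" y] h hd d' by simp
        also have "\<dots> = G (S r (S h y))"
          unfolding G_def r_def using sg_add[OF S, of "\<delta>' - h" "t - s - \<delta>'" "S h y"] hd d' h
          by (simp add: algebra_simps)
        finally show ?thesis unfolding a_def y_def .
      qed
      have "norm (G (S r b) - G (S r a)) \<le> LG * norm (S r b - S r a)"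
        using LG(2) Ma Mb by (meson abs_ge_self add_increasing2 order.trans zero_le_one)
      also have "\<dots> \<le> LG * (L * norm (b - a))" using lipr LG(1) by (rule mult_left_mono)
      finally have "norm (G (S r b) - G (S r a)) \<le> (LG * L) * norm (b - a)" by (simp add: mult.assoc)
      then have "(1/h) * norm (G (S r b) - G (S r a)) \<le> (1/h) * ((LG * L) * norm (b - a))"
        using h by (intro mult_left_mono) auto
      then show "norm ((1/h) *\<^sub>R (S (t - (s + h)) (T (s + h) x) - S (t - s) (T s x)))
        \<le> (LG * L) * norm ((1/h) *\<^sub>R (T h y - S h y))"
        unfolding e1 e2 using h by (simp add: a_def b_def mult.commute mult.left_commute)
    qed
  qed
qed

lemma rd_imp_rcont:
  fixes f :: "real \<Rightarrow> 'b::real_normed_vector"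
  assumes rd: "((\<lambda>h. (1/h) *\<^sub>R (f (s + h) - f s)) \<longlongrightarrow> 0) (at_right 0)" and e: "0 < e"
  shows "\<exists>d>0. \<forall>h. 0 < h \<and> h < d \<longrightarrow> norm (f (s + h) - f s) < e"
proof -
  have "\<forall>\<^sub>F h in at_right 0. dist ((1/h) *\<^sub>R (f (s + h) - f s)) 0 < 1"
    using rd by (rule tendstoD) simp
  then obtain c where c: "c > 0" "\<And>h. h > 0 \<Longrightarrow> h < c \<Longrightarrow> dist ((1/h) *\<^sub>R (f (s + h) - f s)) 0 < 1"
    unfolding eventually_at_right_field by auto
  have "norm (f (s + h) - f s) < e" if h: "0 < h" "h < min c e" for h
  proof -
    have "(1/h) * norm (f (s + h) - f s) < 1" using c(2)[of h] h by simp
    then have "norm (f (s + h) - f s) < h" using h by (simp add: field_simps)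
    then show ?thesis using h by simp
  qed
  moreover have "min c e > 0" using c e by simp
  ultimately show ?thesis by blast
qed

lemma cont_sides:
  fixes f :: "real \<Rightarrow> 'b::real_normed_vector"
  assumes Lf: "\<And>s e. a < s \<Longrightarrow> s \<le> b \<Longrightarrow> 0 < e \<Longrightarrow>
                 \<exists>d>0. \<forall>h. 0 < h \<and> h < d \<and> h \<le> s - a \<longrightarrow> norm (f (s - h) - f s) < e"
    and Rf: "\<And>s e. a \<le> s \<Longrightarrow> s < b \<Longrightarrow> 0 < e \<Longrightarrow>
                 \<exists>d>0. \<forall>h. 0 < h \<and> h < d \<longrightarrow> norm (f (s + h) - f s) < e"
  shows "continuous_on {a..b} f"
  unfolding continuous_on_iff
proof (intro ballI allI impI)
  fix s e assume s: "s \<in> {a..b}" and e: "(0::real) < e"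
  have "\<exists>dl>0. \<forall>h. 0 < h \<and> h < dl \<and> h \<le> s - a \<longrightarrow> norm (f (s - h) - f s) < e"
  proof (cases "a < s")
    case True then show ?thesis using Lf s e by auto
  next
    case False then have "s - a \<le> 0" by simp
    then show ?thesis by (intro exI[of _ 1]) auto
  qed
  then obtain dl where dl: "dl > 0" "\<forall>h. 0 < h \<and> h < dl \<and> h \<le> s - a \<longrightarrow> norm (f (s - h) - f s) < e" by blast
  have "\<exists>dr>0. \<forall>h. 0 < h \<and> h < dr \<and> h \<le> b - s \<longrightarrow> norm (f (s + h) - f s) < e"
  proof (cases "s < b")
    case True then obtain d where "d > 0" "\<forall>h. 0 < h \<and> h < d \<longrightarrow> norm (f (s + h) - f s) < e"
      using Rf s e by fastforce
    then show ?thesis by blast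
  next
    case False then have "b - s \<le> 0" by simp
    then show ?thesis by (intro exI[of _ 1]) auto
  qed
  then obtain dr where dr: "dr > 0" "\<forall>h. 0 < h \<and> h < dr \<and> h \<le> b - s \<longrightarrow> norm (f (s + h) - f s) < e" by blast
  have "dist (f s') (f s) < e" if s': "s' \<in> {a..b}" "dist s' s < min dl dr" for s'
  proof (cases s' s rule: linorder_cases)
    case less
    define h where "h = s - s'"
    have "0 < h" "h < dl" "h \<le> s - a" using less s' unfolding h_def by (auto simp: dist_real_def)
    then have "norm (f (s - h) - f s) < e" using dl(2) by blast
    then show ?thesis unfolding h_def by (simp add: dist_norm)
  next
    case equal then show ?thesis using e by simp
  next
    case greater
    define h where "h = s' - s"
    have "0 < h" "h < dr" "h \<le> b - s" using greater s' unfolding h_def by (auto simp: dist_real_def)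
    then have "norm (f (s + h) - f s) < e" using dr(2) by blast
    then show ?thesis unfolding h_def by (simp add: dist_norm)
  qed
  moreover have "min dl dr > 0" using dl dr by simp
  ultimately show "\<exists>d>0. \<forall>s'\<in>{a..b}. dist s' s < d \<longrightarrow> dist (f s') (f s) < e" by blast
qed

lemma quotdiff:
  fixes S T :: "real \<Rightarrow> 'a::banach_lattice \<Rightarrow> 'a"
  assumes sub: "generator_domain T \<subseteq> generator_domain S"
    and geq: "\<forall>x\<in>generator_domain T. generator S x = generator T x"
    and y: "y \<in> generator_domain T"
  shows "((\<lambda>h. (1/h) *\<^sub>R (T h y - S h y)) \<longlongrightarrow> 0) (at_right 0)"
proof -
  obtain g where g: "((\<lambda>h. (1/h) *\<^sub>R (T h y - y)) \<longlongrightarrow> g) (at_right 0)"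
    using y unfolding generator_domain_def by blast
  obtain g' where g': "((\<lambda>h. (1/h) *\<^sub>R (S h y - y)) \<longlongrightarrow> g') (at_right 0)"
    using y sub unfolding generator_domain_def by blast
  have "generator T y = g" unfolding generator_def by (rule tendsto_Lim[OF _ g]) simp
  moreover have "generator S y = g'" unfolding generator_def by (rule tendsto_Lim[OF _ g']) simp
  ultimately have "g = g'" using geq y by simp
  have "((\<lambda>h. (1/h) *\<^sub>R (T h y - y) - (1/h) *\<^sub>R (S h y - y)) \<longlongrightarrow> g - g') (at_right 0)"
    by (rule tendsto_diff[OF g g'])
  moreover have "(\<lambda>h. (1/h) *\<^sub>R (T h y - y) - (1/h) *\<^sub>R (S h y - y)) = (\<lambda>h. (1/h) *\<^sub>R (T h y - S h y))"
    by (simp add: fun_eq_iff algebra_simps)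
  ultimately show ?thesis using \<open>g = g'\<close> by simp
qed

theorem corollary3p7:
  fixes S T :: "real \<Rightarrow> 'a::banach_lattice \<Rightarrow> 'a"
  assumes "order_continuous_norm TYPE('a)"
    and "convex_C0_semigroup S"
    and "convex_C0_semigroup T"
    and "generator_domain T \<subseteq> generator_domain S"
    and "\<forall>x\<in>generator_domain T. generator S x = generator T x"
    and "closure (generator_domain T) = UNIV"
  shows "\<forall>t\<ge>0. S t = T t"
proof (intro allI impI)
  note oc = assms(1) and S = assms(2) and T = assms(3) and sub = assms(4) and geq = assms(5)
    and dense = assms(6)
  fix t :: real assume t: "0 \<le> t"
  have onD: "S t x = T t x" if xD: "x \<in> generator_domain T" for x
  proof -
    define w where "w s = S (t - s) (T s x)" for s
    have rd: "((\<lambda>h. (1/h) *\<^sub>R (w (s + h) - w s)) \<longlongrightarrow> 0) (at_right 0)" if s: "0 \<le> s" "s < t" for s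
    proof -
      have "T s x \<in> generator_domain T" by (rule gen_invariant[OF oc T xD s(1)])
      then have q: "((\<lambda>h. (1/h) *\<^sub>R (T h (T s x) - S h (T s x))) \<longlongrightarrow> 0) (at_right 0)"
        by (rule quotdiff[OF sub geq])
      show ?thesis unfolding w_def by (rule w_rd[OF S T s q])
    qed
    have cont: "continuous_on {0..t} w"
    proof (rule cont_sides)
      fix s e :: real assume "0 < s" "s \<le> t" "0 < e"
      then show "\<exists>d>0. \<forall>h. 0 < h \<and> h < d \<and> h \<le> s - 0 \<longrightarrow> norm (w (s - h) - w s) < e"
        using w_left_cont[OF S T, of s t e x] unfolding w_def by simp
    next
      fix s e :: real assume "0 \<le> s" "s < t" "0 < e"
      then show "\<exists>d>0. \<forall>h. 0 < h \<and> h < d \<longrightarrow> norm (w (s + h) - w s) < e"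
        using rd_imp_rcont[OF rd] by blast
    qed
    have "w t = w 0" by (rule right_deriv_zero_const[OF t cont rd])
    then show ?thesis unfolding w_def using sg_0[OF S] sg_0[OF T] by simp
  qed
  show "S t = T t"
  proof
    fix z
    have "z \<in> closure (generator_domain T)" using dense by simp
    then obtain xs where xs: "\<And>n. xs n \<in> generator_domain T" "xs \<longlonglongrightarrow> z"
      unfolding closure_sequential by blast
    have "(\<lambda>n. S t (xs n)) \<longlonglongrightarrow> S t z" by (rule isCont_tendsto_compose[OF sg_isCont[OF S t] xs(2)])
    moreover have "(\<lambda>n. T t (xs n)) \<longlonglongrightarrow> T t z" by (rule isCont_tendsto_compose[OF sg_isCont[OF T t] xs(2)])
    moreover have "(\<lambda>n. S t (xs n)) = (\<lambda>n. T t (xs n))" using onD xs(1) by simp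
    ultimately show "S t z = T t z" using LIMSEQ_unique by metis
  qed
qed

end
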